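(* Let $G\in\mathbb{G}_\pi$ have vertex set $V=\{v_1,\dots,v_n\}$ with $n>2$, and let $T=V\setminus\{v_1,v_2\}$. Then $\mathcal{R}(G;V\setminus\{v_1\},T)=\mathcal{R}(G;V\setminus\{v_2\},T)$.
   Context: Let $\mathbb{W}$ be the field of rational functions $p/q$ in a complex variable $\lambda$ ($p,q\in\mathbb{C}[\lambda]$, $q\ne0$); $\pi(p/q)=\deg p-\deg q$ (zero counts as $\pi\le 0$). A graph $G=(V,E,\omega)$ is a finite directed graph, edges $E$ (loops allowed, at most one edge $e_{ij}$ from $v_i$ to $v_j$), weights $\omega:E\to\mathbb{W}\setminus\{0\}$, $\omega(e_{ij})=0$ for non-edges, $M(G)_{ij}=\omega(e_{ij})$. $\mathbb{G}_\pi$ is the set of graphs with $\pi(M(G)_{ij})\le0$ for all entries. $\bar S=V\setminus S$; $\ell(G)$ is $G$ without loops. A path is a sequence of distinct vertices $u_1,\dots,u_m$ ($m\ge2$) with edges $u_k\to u_{k+1}$; a cycle is the same with $u_1=u_m$, $u_1,\dots,u_{m-1}$ distinct; $u_2,\dots,u_{m-1}$ are interior. A nonempty $S\subseteq V$ is a structural set ($S\in st(G)$) if $\ell(G)|_{\bar S}$ has no cycles and $\omega(e_{ii})\ne\lambda$ for $v_i\in\bar S$. For $v_i,v_j\in S$, $\mathcal{B}_{ij}(G;S)$ = paths or cycles from $v_i$ to $v_j$ with no interior vertex in $S$; $\mathcal{P}_\omega(u_1,\dots,u_m)=\omega(u_1u_2)\prod_{k=2}^{m-1}\frac{\omega(u_ku_{k+1})}{\lambda-\omega(u_ku_k)}$;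 $\mathcal{R}_S(G)$ is the graph on $S$ with an edge $v_i\to v_j$ iff $\mathcal{B}_{ij}(G;S)\ne\emptyset$, of weight $\sum_{\beta\in\mathcal{B}_{ij}(G;S)}\mathcal{P}_\omega(\beta)$. For $S_2\subseteq S_1\subseteq V$ with $S_1\in st(G)$ and $S_2\in st(\mathcal{R}_{S_1}(G))$, $\mathcal{R}(G;S_1,S_2)=\mathcal{R}_{S_2}(\mathcal{R}_{S_1}(G))$. *)

theory Defs
  imports "HOL-Computational_Algebra.Computational_Algebra"
begin

type_synonym ratfun = "complex poly fract"

definition lam :: ratfun where
  "lam = Fract [:0, 1:] 1"

text \<open>pi(p/q) = deg p - deg q for any representation f = p/q, q ~= 0 (well defined);
  pi 0 is set to 0, so 0 counts as pi <= 0.\<close>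
definition pideg :: "ratfun \<Rightarrow> int" where
  "pideg f = (if f = 0 then 0 else
     (THE d. \<exists>p q. q \<noteq> 0 \<and> f = Fract p q \<and> d = int (degree p) - int (degree q)))"

text \<open>A weighted directed graph: vertex set, edge set (loops allowed, at most one
  edge per ordered pair), weight function (the matrix M(G)).\<close>
record 'v graph =
  verts :: "'v set"
  arcs  :: "('v \<times> 'v) set"
  wt    :: "'v \<Rightarrow> 'v \<Rightarrow> ratfun"

definition wf_graph :: "'v graph \<Rightarrow> bool" where
  "wf_graph G \<longleftrightarrow> finite (verts G) \<and> arcs G \<subseteq> verts G \<times> verts G \<and>
     (\<forall>i j. ((i, j) \<in> arcs G \<longrightarrow> wt G i j \<noteq> 0) \<and> ((i, j) \<notin> arcs G \<longrightarrow> wt G i j = 0))"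

definition in_Gpi :: "'v graph \<Rightarrow> bool" where
  "in_Gpi G \<longleftrightarrow> (\<forall>i\<in>verts G. \<forall>j\<in>verts G. pideg (wt G i j) \<le> 0)"

definition walk_edges :: "'v graph \<Rightarrow> 'v list \<Rightarrow> bool" where
  "walk_edges G us \<longleftrightarrow> (\<forall>k. Suc k < length us \<longrightarrow> (us ! k, us ! Suc k) \<in> arcs G)"

definition is_path :: "'v graph \<Rightarrow> 'v list \<Rightarrow> bool" where
  "is_path G us \<longleftrightarrow> length us \<ge> 2 \<and> distinct us \<and> walk_edges G us"

definition is_cycle :: "'v graph \<Rightarrow> 'v list \<Rightarrow> bool" where
  "is_cycle G us \<longleftrightarrow> length us \<ge> 2 \<and> hd us = last us \<and> distinct (butlast us) \<and> walk_edges G us"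

definition noloops :: "'v graph \<Rightarrow> 'v graph" where
  "noloops G = G\<lparr>arcs := {(i, j). (i, j) \<in> arcs G \<and> i \<noteq> j},
                  wt := (\<lambda>i j. if i = j then 0 else wt G i j)\<rparr>"

definition restrict :: "'v graph \<Rightarrow> 'v set \<Rightarrow> 'v graph" where
  "restrict G U = \<lparr>verts = verts G \<inter> U, arcs = arcs G \<inter> (U \<times> U),
                   wt = (\<lambda>i j. if i \<in> U \<and> j \<in> U then wt G i j else 0)\<rparr>"

definition has_cycle :: "'v graph \<Rightarrow> bool" where
  "has_cycle G \<longleftrightarrow> (\<exists>us. is_cycle G us)"

definition st :: "'v graph \<Rightarrow> 'v set set" where
  "st G = {S. S \<noteq> {} \<and> S \<subseteq> verts G \<and>
              \<not> has_cycle (restrict (noloops G) (verts G - S)) \<and>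
              (\<forall>i \<in> verts G - S. wt G i i \<noteq> lam)}"

definition Bpaths :: "'v graph \<Rightarrow> 'v set \<Rightarrow> 'v \<Rightarrow> 'v \<Rightarrow> 'v list set" where
  "Bpaths G S i j = {us. (is_path G us \<or> is_cycle G us) \<and> hd us = i \<and> last us = j \<and>
                        set (butlast (tl us)) \<inter> S = {}}"

definition Pw :: "'v graph \<Rightarrow> 'v list \<Rightarrow> ratfun" where
  "Pw G us = wt G (us ! 0) (us ! 1) *
     (\<Prod>k\<in>{1..<length us - 1}. wt G (us ! k) (us ! Suc k) / (lam - wt G (us ! k) (us ! k)))"

definition Rred :: "'v set \<Rightarrow> 'v graph \<Rightarrow> 'v graph" where
  "Rred S G = \<lparr>verts = S,
               arcs = {(i, j). i \<in> S \<and> j \<in> S \<and> Bpaths G S i j \<noteq> {}},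
               wt = (\<lambda>i j. if i \<in> S \<and> j \<in> S then (\<Sum>\<beta>\<in>Bpaths G S i j. Pw G \<beta>) else 0)\<rparr>"

definition R2 :: "'v graph \<Rightarrow> 'v set \<Rightarrow> 'v set \<Rightarrow> 'v graph" where
  "R2 G S1 S2 = Rred S2 (Rred S1 G)"

end

theory Submission imports Defs begin

lemma fract_zero_iff: "b \<noteq> 0 \<Longrightarrow> Fract a b = 0 \<longleftrightarrow> a = 0"
  by (simp add: Zero_fract_def eq_fract)

lemma pideg_rep:
  assumes "pideg f \<le> 0"
  shows "\<exists>p q. q \<noteq> 0 \<and> f = Fract p q \<and> degree p \<le> degree q"
proof (cases "f = 0")
  case True
  then show ?thesis by (intro exI[of _ 0] exI[of _ 1]) (simp add: Zero_fract_def)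
next
  case False
  obtain p q where f: "f = Fract p q" "q \<noteq> 0" by (cases f)
  have p0: "p \<noteq> 0" using False f fract_zero_iff by blast
  have "pideg f = (THE d. \<exists>p q. q \<noteq> 0 \<and> f = Fract p q \<and> d = int (degree p) - int (degree q))"
    using False by (simp add: pideg_def)
  also have "\<dots> = int (degree p) - int (degree q)"
  proof (rule the_equality)
    show "\<exists>pa qa. qa \<noteq> 0 \<and> f = Fract pa qa \<and> int (degree p) - int (degree q) = int (degree pa) - int (degree qa)"
      using f by blast
  next
    fix d assume "\<exists>pa qa. qa \<noteq> 0 \<and> f = Fract pa qa \<and> d = int (degree pa) - int (degree qa)"
    then obtain p' q' where h: "q' \<noteq> 0" "f = Fract p' q'" "d = int (degree p') - int (degree q')" by blast
    have e: "p * q' = p' * q" using h f eq_fract(1)[of q q' p p'] by simp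
    have p'0: "p' \<noteq> 0" using False h fract_zero_iff by blast
    have "degree (p * q') = degree (p' * q)" using e by simp
    then have "degree p + degree q' = degree p' + degree q"
      using p0 p'0 h(1) f(2) by (simp add: degree_mult_eq)
    then show "d = int (degree p) - int (degree q)" using h(3) by linarith
  qed
  finally have "pideg f = int (degree p) - int (degree q)" .
  then show ?thesis using assms f by (intro exI[of _ p] exI[of _ q]) auto
qed

lemma lam_minus_rep:
  assumes "q \<noteq> 0" "degree p \<le> degree q"
  shows "lam - Fract p q = Fract ([:0,1:] * q - p) q"
    and "degree ([:0,1:] * q - p) = degree q + 1"
proof -
  show "lam - Fract p q = Fract ([:0,1:] * q - p) q"
    using assms unfolding lam_def by simp
  have d: "degree ([:0,1:] * q) = degree q + 1" using assms by (simp add: degree_mult_eq)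
  have "degree ([:0,1:] * q + - p) = degree ([:0,1:] * q)"
    by (rule degree_add_eq_left) (use d assms in simp)
  then show "degree ([:0,1:] * q - p) = degree q + 1" using d by simp
qed

lemma key_nonzero:
  assumes "pideg f \<le> 0" "pideg g \<le> 0" "pideg h \<le> 0" "pideg k \<le> 0"
  shows "lam - f \<noteq> 0" "(lam - f) * (lam - g) - h * k \<noteq> 0"
proof -
  obtain p1 q1 where 1: "q1 \<noteq> 0" "f = Fract p1 q1" "degree p1 \<le> degree q1" using pideg_rep[OF assms(1)] by blast
  obtain p2 q2 where 2: "q2 \<noteq> 0" "g = Fract p2 q2" "degree p2 \<le> degree q2" using pideg_rep[OF assms(2)] by blast
  obtain p3 q3 where 3: "q3 \<noteq> 0" "h = Fract p3 q3" "degree p3 \<le> degree q3" using pideg_rep[OF assms(3)] by blast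
  obtain p4 q4 where 4: "q4 \<noteq> 0" "k = Fract p4 q4" "degree p4 \<le> degree q4" using pideg_rep[OF assms(4)] by blast
  define N1 where "N1 = [:0,1:] * q1 - p1"
  define N2 where "N2 = [:0,1:] * q2 - p2"
  have e1: "lam - f = Fract N1 q1" "degree N1 = degree q1 + 1" using lam_minus_rep[OF 1(1,3)] 1(2) N1_def by auto
  have e2: "lam - g = Fract N2 q2" "degree N2 = degree q2 + 1" using lam_minus_rep[OF 2(1,3)] 2(2) N2_def by auto
  have n1: "N1 \<noteq> 0" using e1(2) by auto
  have n2: "N2 \<noteq> 0" using e2(2) by auto
  show "lam - f \<noteq> 0" using e1 n1 1(1) fract_zero_iff by auto
  have eq: "(lam - f) * (lam - g) - h * k = Fract (N1 * N2 * (q3 * q4) - p3 * p4 * (q1 * q2)) (q1 * q2 * (q3 * q4))"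
    using 1 2 3 4 e1 e2 by simp
  have dP: "degree (N1 * N2 * (q3 * q4)) = degree q1 + degree q2 + degree q3 + degree q4 + 2"
    using n1 n2 3 4 e1 e2 by (simp add: degree_mult_eq)
  have dQ: "degree (p3 * p4 * (q1 * q2)) \<le> degree q1 + degree q2 + degree q3 + degree q4"
  proof -
    have "degree (p3 * p4 * (q1 * q2)) \<le> degree (p3 * p4) + degree (q1 * q2)" by (rule degree_mult_le)
    also have "\<dots> \<le> degree p3 + degree p4 + (degree q1 + degree q2)"
      using degree_mult_le[of p3 p4] degree_mult_le[of q1 q2] by linarith
    finally show ?thesis using 3 4 by linarith
  qed
  have "N1 * N2 * (q3 * q4) - p3 * p4 * (q1 * q2) \<noteq> 0"
  proof
    assume "N1 * N2 * (q3 * q4) - p3 * p4 * (q1 * q2) = 0"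
    then have "N1 * N2 * (q3 * q4) = p3 * p4 * (q1 * q2)" by simp
    then have "degree (N1 * N2 * (q3 * q4)) = degree (p3 * p4 * (q1 * q2))" by (rule arg_cong)
    then show False using dP dQ by linarith
  qed
  moreover have "q1 * q2 * (q3 * q4) \<noteq> 0" using 1 2 3 4 by simp
  ultimately show "(lam - f) * (lam - g) - h * k \<noteq> 0" unfolding eq using fract_zero_iff by blast
qed


lemma walk2: "walk_edges H [x, y] \<longleftrightarrow> (x, y) \<in> arcs H"
  unfolding walk_edges_def by (auto simp: less_Suc_eq)

lemma walk3: "walk_edges H [x, y, z] \<longleftrightarrow> (x, y) \<in> arcs H \<and> (y, z) \<in> arcs H"
  unfolding walk_edges_def by (auto simp: less_Suc_eq nth_Cons split: nat.splits)

lemma walk_mem: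
  assumes "walk_edges H us" "length us \<ge> 2" "arcs H \<subseteq> verts H \<times> verts H"
  shows "set us \<subseteq> verts H"
proof
  fix x assume "x \<in> set us"
  then obtain k where k: "k < length us" "us ! k = x" by (auto simp: in_set_conv_nth)
  show "x \<in> verts H"
  proof (cases "Suc k < length us")
    case True
    then show ?thesis using assms k unfolding walk_edges_def by blast
  next
    case False
    then have "Suc (k - 1) < length us" "Suc (k - 1) = k" using k assms(2) by auto
    then show ?thesis using assms k unfolding walk_edges_def by (metis mem_Sigma_iff subsetD)
  qed
qed

lemma decomp:
  assumes "length us \<ge> 2" shows "us = hd us # butlast (tl us) @ [last us]"
proof -
  obtain x ys where u: "us = x # ys" using assms by (cases us) auto
  moreover have "ys \<noteq> []" using assms u by auto
  ultimately show ?thesis by simp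
qed

lemma sub_single: "distinct m \<Longrightarrow> set m \<subseteq> {c} \<Longrightarrow> m = [] \<or> m = [c]"
proof (cases m)
  case (Cons x ys)
  assume d: "distinct m" and s: "set m \<subseteq> {c}"
  then have "x = c" using Cons by auto
  moreover have "ys = []"
  proof (cases ys)
    case (Cons y zs) then show ?thesis using d s \<open>m = x # ys\<close> by auto
  qed simp
  ultimately show ?thesis using Cons by simp
qed simp

lemma Bpaths_char:
  assumes A: "arcs H \<subseteq> verts H \<times> verts H" and "i \<in> verts H" "j \<in> verts H" "i \<noteq> c" "j \<noteq> c"
  shows "Bpaths H (verts H - {c}) i j =
     {us. (us = [i, j] \<and> (i, j) \<in> arcs H) \<or> (us = [i, c, j] \<and> (i, c) \<in> arcs H \<and> (c, j) \<in> arcs H)}"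
proof (intro set_eqI iffI)
  fix us assume "us \<in> Bpaths H (verts H - {c}) i j"
  then have B: "is_path H us \<or> is_cycle H us" "hd us = i" "last us = j"
     "set (butlast (tl us)) \<inter> (verts H - {c}) = {}" unfolding Bpaths_def by auto
  define m where "m = butlast (tl us)"
  have l2: "length us \<ge> 2" and w: "walk_edges H us" using B(1) unfolding is_path_def is_cycle_def by auto
  have us: "us = i # m @ [j]"
  proof -
    have "us = hd us # butlast (tl us) @ [last us]" by (rule decomp[OF l2])
    then show ?thesis unfolding m_def B(2)[symmetric] B(3)[symmetric] .
  qed
  have bl: "butlast us = i # m" using us by (simp add: butlast_append)
  have "distinct m"
    using B(1)
  proof
    assume "is_path H us" then have "distinct us" unfolding is_path_def by blast
    then show ?thesis using us by (metis distinct.simps(2) distinct_append)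
  next
    assume "is_cycle H us" then have "distinct (butlast us)" unfolding is_cycle_def by blast
    then show ?thesis using bl by simp
  qed
  moreover have "set m \<subseteq> {c}"
  proof -
    have "set m \<subseteq> set us" using us by auto
    then have "set m \<subseteq> verts H" using walk_mem[OF w l2 A] by blast
    then show ?thesis using B(4) unfolding m_def[symmetric] by blast
  qed
  ultimately have "m = [] \<or> m = [c]" by (rule sub_single)
  then show "us \<in> {us. (us = [i, j] \<and> (i, j) \<in> arcs H) \<or> (us = [i, c, j] \<and> (i, c) \<in> arcs H \<and> (c, j) \<in> arcs H)}"
  proof
    assume "m = []" then have u: "us = [i, j]" using us by simp
    then have "(i, j) \<in> arcs H" using w walk2 by metis
    then show ?thesis using u by blast
  next
    assume "m = [c]" then have u: "us = [i, c, j]" using us by simp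
    then have "(i, c) \<in> arcs H \<and> (c, j) \<in> arcs H" using w walk3 by metis
    then show ?thesis using u by blast
  qed
next
  fix us assume "us \<in> {us. (us = [i, j] \<and> (i, j) \<in> arcs H) \<or> (us = [i, c, j] \<and> (i, c) \<in> arcs H \<and> (c, j) \<in> arcs H)}"
  then have "(us = [i, j] \<and> (i, j) \<in> arcs H) \<or> (us = [i, c, j] \<and> (i, c) \<in> arcs H \<and> (c, j) \<in> arcs H)" by blast
  then show "us \<in> Bpaths H (verts H - {c}) i j"
  proof
    assume h: "us = [i, j] \<and> (i, j) \<in> arcs H"
    then have w: "walk_edges H us" using walk2 by metis
    have "is_path H us \<or> is_cycle H us"
    proof (cases "i = j")
      case True then show ?thesis using w h unfolding is_cycle_def by simp
    next
      case False then show ?thesis using w h unfolding is_path_def by simp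
    qed
    then show ?thesis using h unfolding Bpaths_def by simp
  next
    assume h: "us = [i, c, j] \<and> (i, c) \<in> arcs H \<and> (c, j) \<in> arcs H"
    then have w: "walk_edges H us" using walk3 by metis
    have "is_path H us \<or> is_cycle H us"
    proof (cases "i = j")
      case True then show ?thesis using w h assms(4,5) unfolding is_cycle_def by simp
    next
      case False then show ?thesis using w h assms(4,5) unfolding is_path_def by simp
    qed
    then show ?thesis using h unfolding Bpaths_def by simp
  qed
qed

lemma sum_char:
  assumes A: "arcs H \<subseteq> verts H \<times> verts H" and "i \<in> verts H" "j \<in> verts H" "i \<noteq> c" "j \<noteq> c"
    and Z: "\<And>x y. (x, y) \<notin> arcs H \<Longrightarrow> wt H x y = 0"
  shows "(\<Sum>\<beta>\<in>Bpaths H (verts H - {c}) i j. Pw H \<beta>) = wt H i j + wt H i c * wt H c j / (lam - wt H c c)"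
proof -
  have p2: "Pw H [i, j] = wt H i j" by (simp add: Pw_def)
  have p3: "Pw H [i, c, j] = wt H i c * (wt H c j / (lam - wt H c c))" by (simp add: Pw_def)
  show ?thesis
    unfolding Bpaths_char[OF assms(1-5)]
    apply (cases "(i, j) \<in> arcs H"; cases "(i, c) \<in> arcs H \<and> (c, j) \<in> arcs H")
    using Z p2 p3 by (auto simp: Collect_disj_eq)
qed


lemma Lalg:
  fixes A B D wab wba wia wib waj wbj :: "'a::field"
  assumes A: "A \<noteq> 0" and D: "D \<noteq> 0" and Dd: "D = A*B - wab*wba"
  shows "wia*waj/A + (wib + wia*wab/A)*(wbj + wba*waj/A)/(D/A) = (wia*waj*B + wia*wab*wbj + wib*wba*waj + wib*wbj*A)/D"
proof -
  have "(wib + wia*wab/A)*(wbj + wba*waj/A)/(D/A) = (wib*A + wia*wab)*(wbj*A + wba*waj)/(A*D)"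
    using A D by (simp add: field_simps)
  moreover have "wia*waj/A = wia*waj*D/(A*D)" using A D by simp
  ultimately have "wia*waj/A + (wib + wia*wab/A)*(wbj + wba*waj/A)/(D/A) = (wia*waj*D + (wib*A + wia*wab)*(wbj*A + wba*waj))/(A*D)"
    by (simp add: add_divide_distrib)
  also have "wia*waj*D + (wib*A + wia*wab)*(wbj*A + wba*waj) = A * (wia*waj*B + wia*wab*wbj + wib*wba*waj + wib*wbj*A)"
    unfolding Dd by (simp add: algebra_simps)
  also have "A * (wia*waj*B + wia*wab*wbj + wib*wba*waj + wib*wbj*A) / (A*D) = (wia*waj*B + wia*wab*wbj + wib*wba*waj + wib*wbj*A)/D"
    using A by simp
  finally show ?thesis .
qed

lemma alg:
  fixes l waa wbb wab wba wia wib waj wbj wij :: "'a::field"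
  assumes A: "l - waa \<noteq> 0" and B: "l - wbb \<noteq> 0" and D: "(l - waa) * (l - wbb) - wab * wba \<noteq> 0"
  shows "wij + wia*waj/(l-waa) + (wib + wia*wab/(l-waa))*(wbj + wba*waj/(l-waa))/(l - (wbb + wba*wab/(l-waa)))
       = wij + wib*wbj/(l-wbb) + (wia + wib*wba/(l-wbb))*(waj + wab*wbj/(l-wbb))/(l - (waa + wab*wba/(l-wbb)))"
proof -
  define D' where "D' = (l - waa) * (l - wbb) - wab * wba"
  have "D' / (l - waa) = (l - waa) * (l - wbb) / (l - waa) - wab * wba / (l - waa)"
    unfolding D'_def by (rule diff_divide_distrib)
  also have "\<dots> = (l - wbb) - wba * wab / (l - waa)" using A by (simp add: mult.commute)
  finally have e1: "l - (wbb + wba*wab/(l-waa)) = D' / (l - waa)" by simp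
  have "D' / (l - wbb) = (l - waa) * (l - wbb) / (l - wbb) - wab * wba / (l - wbb)"
    unfolding D'_def by (rule diff_divide_distrib)
  also have "\<dots> = (l - waa) - wab * wba / (l - wbb)" using B by simp
  finally have e2: "l - (waa + wab*wba/(l-wbb)) = D' / (l - wbb)" by simp
  have L1: "wia*waj/(l-waa) + (wib + wia*wab/(l-waa))*(wbj + wba*waj/(l-waa))/(D'/(l-waa)) =
    (wia*waj*(l-wbb) + wia*wab*wbj + wib*wba*waj + wib*wbj*(l-waa))/D'"
    by (rule Lalg) (use A D in \<open>auto simp: D'_def\<close>)
  have L2: "wib*wbj/(l-wbb) + (wia + wib*wba/(l-wbb))*(waj + wab*wbj/(l-wbb))/(D'/(l-wbb)) =
    (wib*wbj*(l-waa) + wib*wba*waj + wia*wab*wbj + wia*waj*(l-wbb))/D'"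
    by (rule Lalg) (use B D in \<open>auto simp: D'_def algebra_simps\<close>)
  have "wib*wbj*(l-waa) + wib*wba*waj + wia*wab*wbj + wia*waj*(l-wbb) = wia*waj*(l-wbb) + wia*wab*wbj + wib*wba*waj + wib*wbj*(l-waa)"
    by (simp add: algebra_simps)
  then show ?thesis unfolding e1 e2 using L1 L2 by (simp add: add.assoc)
qed

lemma no_cycle:
  assumes "U \<subseteq> {c}" shows "\<not> has_cycle (restrict (noloops H) U)"
proof
  assume "has_cycle (restrict (noloops H) U)"
  then obtain us where "is_cycle (restrict (noloops H) U) us" unfolding has_cycle_def by blast
  then have "(us ! 0, us ! Suc 0) \<in> arcs (restrict (noloops H) U)"
    unfolding is_cycle_def walk_edges_def by auto
  then show False using assms unfolding restrict_def noloops_def by auto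
qed

lemma one_side:
  fixes G :: "'v graph" and a b :: 'v
  assumes wf: "wf_graph G" and pi: "in_Gpi G"
    and a: "a \<in> verts G" and b: "b \<in> verts G" and ab: "a \<noteq> b"
    and card: "card (verts G) > 2"
  shows "verts G - {a} \<in> st G \<and> verts G - {a, b} \<in> st (Rred (verts G - {a}) G) \<and>
    R2 G (verts G - {a}) (verts G - {a, b}) =
      \<lparr>verts = verts G - {a, b},
       arcs = {(i, j). i \<in> verts G - {a, b} \<and> j \<in> verts G - {a, b} \<and>
          ((i, j) \<in> arcs G \<or> (i, a) \<in> arcs G \<and> (a, j) \<in> arcs G \<or>
           ((i, b) \<in> arcs G \<or> (i, a) \<in> arcs G \<and> (a, b) \<in> arcs G) \<and>
           ((b, j) \<in> arcs G \<or> (b, a) \<in> arcs G \<and> (a, j) \<in> arcs G))},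
       wt = (\<lambda>i j. if i \<in> verts G - {a, b} \<and> j \<in> verts G - {a, b} then
          wt G i j + wt G i a * wt G a j / (lam - wt G a a) +
          (wt G i b + wt G i a * wt G a b / (lam - wt G a a)) *
          (wt G b j + wt G b a * wt G a j / (lam - wt G a a)) /
          (lam - (wt G b b + wt G b a * wt G a b / (lam - wt G a a))) else 0)\<rparr>"
proof -
  define V where "V = verts G"
  define R1 where "R1 = Rred (V - {a}) G"
  have fin: "finite V" and A: "arcs G \<subseteq> V \<times> V" and Z: "\<And>x y. (x, y) \<notin> arcs G \<Longrightarrow> wt G x y = 0"
    using wf unfolding wf_graph_def V_def by auto
  have P: "\<And>x y. x \<in> V \<Longrightarrow> y \<in> V \<Longrightarrow> pideg (wt G x y) \<le> 0" using pi unfolding in_Gpi_def V_def by auto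
  have nA: "lam - wt G a a \<noteq> 0" using key_nonzero(1)[OF P P P P] a b unfolding V_def by blast
  have nB: "lam - wt G b b \<noteq> 0" using key_nonzero(1)[OF P P P P] a b unfolding V_def by blast
  have nD: "(lam - wt G a a) * (lam - wt G b b) - wt G a b * wt G b a \<noteq> 0"
    using key_nonzero(2)[OF P P P P] a b unfolding V_def by blast
  have VR1: "verts R1 = V - {a}" unfolding R1_def Rred_def by simp
  have AR1: "arcs R1 \<subseteq> verts R1 \<times> verts R1" unfolding R1_def Rred_def by auto
  have arcsR1: "(x, y) \<in> arcs R1 \<longleftrightarrow> x \<in> V - {a} \<and> y \<in> V - {a} \<and>
      ((x, y) \<in> arcs G \<or> (x, a) \<in> arcs G \<and> (a, y) \<in> arcs G)" for x y
    proof (cases "x \<in> V - {a} \<and> y \<in> V - {a}")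
      case True
      then show ?thesis unfolding R1_def Rred_def
        using Bpaths_char[of G x y a] A True unfolding V_def by auto
    qed (auto simp: R1_def Rred_def)
  have wtR1: "\<And>x y. x \<in> V - {a} \<Longrightarrow> y \<in> V - {a} \<Longrightarrow>
      wt R1 x y = wt G x y + wt G x a * wt G a y / (lam - wt G a a)"
    unfolding R1_def Rred_def using sum_char[of G _ _ a] A Z unfolding V_def by auto
  have ZR1: "\<And>x y. (x, y) \<notin> arcs R1 \<Longrightarrow> wt R1 x y = 0"
    unfolding R1_def Rred_def by auto
  have ne: "V - {a, b} \<noteq> {}"
  proof
    assume "V - {a, b} = {}"
    then have "V \<subseteq> {a, b}" by auto
    then have "card V \<le> card {a, b}" by (rule card_mono[rotated]) simp
    then show False using card unfolding V_def by (simp add: card_insert_if split: if_splits)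
  qed
  have st1: "V - {a} \<in> st G"
    unfolding st_def V_def[symmetric] using ne nA
    by (auto intro!: no_cycle[of _ a])
  have wbb: "wt R1 b b \<noteq> lam"
  proof
    assume "wt R1 b b = lam"
    then have "lam - (wt G b b + wt G b a * wt G a b / (lam - wt G a a)) = 0"
      using wtR1[of b b] a b ab unfolding V_def by auto
    moreover have "lam - (wt G b b + wt G b a * wt G a b / (lam - wt G a a)) =
       ((lam - wt G a a) * (lam - wt G b b) - wt G a b * wt G b a) / (lam - wt G a a)"
      using nA by (simp add: field_simps)
    ultimately show False using nA nD by simp
  qed
  have T: "V - {a, b} = verts R1 - {b}" using VR1 by auto
  have st2: "V - {a, b} \<in> st R1"
    unfolding st_def using ne wbb VR1 by (auto intro!: no_cycle[of _ b])
  have eq: "R2 G (V - {a}) (V - {a, b}) = Rred (V - {a, b}) R1"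
    unfolding R2_def R1_def ..
  have bR: "b \<in> verts R1" using VR1 b ab unfolding V_def by auto
  have arcs2: "\<And>i j. i \<in> verts R1 - {b} \<Longrightarrow> j \<in> verts R1 - {b} \<Longrightarrow>
    Bpaths R1 (verts R1 - {b}) i j \<noteq> {} \<longleftrightarrow> ((i, j) \<in> arcs R1 \<or> (i, b) \<in> arcs R1 \<and> (b, j) \<in> arcs R1)"
    using Bpaths_char[OF AR1] by auto
  have bV: "b \<in> V - {a}" using b ab unfolding V_def by auto
  have arcs2': "Bpaths R1 (V - {a, b}) i j \<noteq> {} \<longleftrightarrow>
          ((i, j) \<in> arcs G \<or> (i, a) \<in> arcs G \<and> (a, j) \<in> arcs G \<or>
           ((i, b) \<in> arcs G \<or> (i, a) \<in> arcs G \<and> (a, b) \<in> arcs G) \<and>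
           ((b, j) \<in> arcs G \<or> (b, a) \<in> arcs G \<and> (a, j) \<in> arcs G))"
    if i: "i \<in> V - {a, b}" and j: "j \<in> V - {a, b}" for i j
  proof -
    have i': "i \<in> verts R1 - {b}" and j': "j \<in> verts R1 - {b}" using i j T by auto
    have "Bpaths R1 (V - {a, b}) i j \<noteq> {} \<longleftrightarrow> ((i, j) \<in> arcs R1 \<or> (i, b) \<in> arcs R1 \<and> (b, j) \<in> arcs R1)"
      using arcs2[OF i' j'] unfolding T[symmetric] .
    also have "\<dots> \<longleftrightarrow> ((i, j) \<in> arcs G \<or> (i, a) \<in> arcs G \<and> (a, j) \<in> arcs G \<or>
           ((i, b) \<in> arcs G \<or> (i, a) \<in> arcs G \<and> (a, b) \<in> arcs G) \<and>
           ((b, j) \<in> arcs G \<or> (b, a) \<in> arcs G \<and> (a, j) \<in> arcs G))"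
      using arcsR1[of i j] arcsR1[of i b] arcsR1[of b j] i j bV by auto
    finally show ?thesis .
  qed
  have wt2: "\<And>i j. i \<in> verts R1 - {b} \<Longrightarrow> j \<in> verts R1 - {b} \<Longrightarrow>
    (\<Sum>\<beta>\<in>Bpaths R1 (verts R1 - {b}) i j. Pw R1 \<beta>) = wt R1 i j + wt R1 i b * wt R1 b j / (lam - wt R1 b b)"
    using sum_char[OF AR1 _ _ _ _ ZR1] by auto
  have "Rred (V - {a, b}) R1 = \<lparr>verts = V - {a, b},
       arcs = {(i, j). i \<in> V - {a, b} \<and> j \<in> V - {a, b} \<and>
          ((i, j) \<in> arcs G \<or> (i, a) \<in> arcs G \<and> (a, j) \<in> arcs G \<or>
           ((i, b) \<in> arcs G \<or> (i, a) \<in> arcs G \<and> (a, b) \<in> arcs G) \<and>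
           ((b, j) \<in> arcs G \<or> (b, a) \<in> arcs G \<and> (a, j) \<in> arcs G))},
       wt = (\<lambda>i j. if i \<in> V - {a, b} \<and> j \<in> V - {a, b} then
          wt G i j + wt G i a * wt G a j / (lam - wt G a a) +
          (wt G i b + wt G i a * wt G a b / (lam - wt G a a)) *
          (wt G b j + wt G b a * wt G a j / (lam - wt G a a)) /
          (lam - (wt G b b + wt G b a * wt G a b / (lam - wt G a a))) else 0)\<rparr>"
  proof -
    have AE: "{(i, j). i \<in> V - {a, b} \<and> j \<in> V - {a, b} \<and> Bpaths R1 (V - {a, b}) i j \<noteq> {}} =
      {(i, j). i \<in> V - {a, b} \<and> j \<in> V - {a, b} \<and>
          ((i, j) \<in> arcs G \<or> (i, a) \<in> arcs G \<and> (a, j) \<in> arcs G \<or>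
           ((i, b) \<in> arcs G \<or> (i, a) \<in> arcs G \<and> (a, b) \<in> arcs G) \<and>
           ((b, j) \<in> arcs G \<or> (b, a) \<in> arcs G \<and> (a, j) \<in> arcs G))}"
      using arcs2' by blast
    have WE: "(\<lambda>i j. if i \<in> V - {a, b} \<and> j \<in> V - {a, b} then sum (Pw R1) (Bpaths R1 (V - {a, b}) i j) else 0) =
      (\<lambda>i j. if i \<in> V - {a, b} \<and> j \<in> V - {a, b} then
          wt G i j + wt G i a * wt G a j / (lam - wt G a a) +
          (wt G i b + wt G i a * wt G a b / (lam - wt G a a)) *
          (wt G b j + wt G b a * wt G a j / (lam - wt G a a)) /
          (lam - (wt G b b + wt G b a * wt G a b / (lam - wt G a a))) else 0)"
    proof (intro ext)
      fix i j
      show "(if i \<in> V - {a, b} \<and> j \<in> V - {a, b} then sum (Pw R1) (Bpaths R1 (V - {a, b}) i j) else 0) =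
       (if i \<in> V - {a, b} \<and> j \<in> V - {a, b} then
          wt G i j + wt G i a * wt G a j / (lam - wt G a a) +
          (wt G i b + wt G i a * wt G a b / (lam - wt G a a)) *
          (wt G b j + wt G b a * wt G a j / (lam - wt G a a)) /
          (lam - (wt G b b + wt G b a * wt G a b / (lam - wt G a a))) else 0)"
      proof (cases "i \<in> V - {a, b} \<and> j \<in> V - {a, b}")
        case True
        then have "sum (Pw R1) (Bpaths R1 (V - {a, b}) i j) = wt R1 i j + wt R1 i b * wt R1 b j / (lam - wt R1 b b)"
          using wt2 T by auto
        also have "\<dots> = wt G i j + wt G i a * wt G a j / (lam - wt G a a) +
          (wt G i b + wt G i a * wt G a b / (lam - wt G a a)) *
          (wt G b j + wt G b a * wt G a j / (lam - wt G a a)) /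
          (lam - (wt G b b + wt G b a * wt G a b / (lam - wt G a a)))"
          using True wtR1 b ab unfolding V_def by (simp add: add.assoc)
        finally show ?thesis using True by simp
      next
        case False
        show ?thesis by (simp only: if_not_P[OF False])
      qed
    qed
    show ?thesis unfolding Rred_def AE WE by (rule refl)
  qed
  then show ?thesis using st1 st2 eq unfolding V_def R1_def by simp
qed

theorem lemma4:
  fixes G :: "'v graph" and a b :: 'v
  assumes "wf_graph G" and "in_Gpi G"
    and "a \<in> verts G" and "b \<in> verts G" and "a \<noteq> b"
    and "card (verts G) > 2"
  shows "verts G - {a} \<in> st G \<and> verts G - {a, b} \<in> st (Rred (verts G - {a}) G) \<and>
         verts G - {b} \<in> st G \<and> verts G - {a, b} \<in> st (Rred (verts G - {b}) G) \<and>
         R2 G (verts G - {a}) (verts G - {a, b}) = R2 G (verts G - {b}) (verts G - {a, b})"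
proof -
  have ba: "{b, a} = {a, b}" by auto
  note S1 = one_side[OF assms]
  note S2 = one_side[OF assms(1,2,4,3) assms(5)[symmetric] assms(6), unfolded ba]
  have P: "\<And>x y. x \<in> verts G \<Longrightarrow> y \<in> verts G \<Longrightarrow> pideg (wt G x y) \<le> 0" using assms(2) unfolding in_Gpi_def by auto
  have nA: "lam - wt G a a \<noteq> 0" using key_nonzero(1)[OF P P P P] assms(3) by blast
  have nB: "lam - wt G b b \<noteq> 0" using key_nonzero(1)[OF P P P P] assms(4) by blast
  have nD: "(lam - wt G a a) * (lam - wt G b b) - wt G a b * wt G b a \<noteq> 0"
    using key_nonzero(2)[OF P P P P] assms(3,4) by blast
  have W: "\<And>i j. wt G i j + wt G i a * wt G a j / (lam - wt G a a) +
          (wt G i b + wt G i a * wt G a b / (lam - wt G a a)) *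
          (wt G b j + wt G b a * wt G a j / (lam - wt G a a)) /
          (lam - (wt G b b + wt G b a * wt G a b / (lam - wt G a a))) =
        wt G i j + wt G i b * wt G b j / (lam - wt G b b) +
          (wt G i a + wt G i b * wt G b a / (lam - wt G b b)) *
          (wt G a j + wt G a b * wt G b j / (lam - wt G b b)) /
          (lam - (wt G a a + wt G a b * wt G b a / (lam - wt G b b)))"
    by (rule alg[OF nA nB nD])
  have Ar: "{(i, j). i \<in> verts G - {a, b} \<and> j \<in> verts G - {a, b} \<and>
          ((i, j) \<in> arcs G \<or> (i, a) \<in> arcs G \<and> (a, j) \<in> arcs G \<or>
           ((i, b) \<in> arcs G \<or> (i, a) \<in> arcs G \<and> (a, b) \<in> arcs G) \<and>
           ((b, j) \<in> arcs G \<or> (b, a) \<in> arcs G \<and> (a, j) \<in> arcs G))} =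
        {(i, j). i \<in> verts G - {a, b} \<and> j \<in> verts G - {a, b} \<and>
          ((i, j) \<in> arcs G \<or> (i, b) \<in> arcs G \<and> (b, j) \<in> arcs G \<or>
           ((i, a) \<in> arcs G \<or> (i, b) \<in> arcs G \<and> (b, a) \<in> arcs G) \<and>
           ((a, j) \<in> arcs G \<or> (a, b) \<in> arcs G \<and> (b, j) \<in> arcs G))}"
    by blast
  note E1 = conjunct2[OF conjunct2[OF S1]]
  note E2 = conjunct2[OF conjunct2[OF S2]]
  have "R2 G (verts G - {a}) (verts G - {a, b}) = R2 G (verts G - {b}) (verts G - {a, b})"
    unfolding E1 E2 Ar W ..
  then show ?thesis using S1 S2 by blast
qed

end
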